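(* Let $(\mathcal V,\mathcal W,\lambda)$ be a FTvN system with $\mathcal V$ finite dimensional, and suppose the system is orbit-transitive. If $x\prec y$, then there exists a doubly stochastic transformation $D$, which is a convex combination of elements of $\operatorname{Aut}(\mathcal V,\mathcal W,\lambda)$, such that $x=Dy$.
   Context: A Fan-Theobald-von Neumann (FTvN) system is a triple $(\mathcal V,\mathcal W,\lambda)$ where $\mathcal V,\mathcal W$ are real inner product spaces and $\lambda:\mathcal V\to\mathcal W$ is a map such that: (A1) $\|\lambda(x)\|=\|x\|$ for all $x$; (A2) $\langle x,y\rangle\le\langle\lambda(x),\lambda(y)\rangle$ for all $x,y$; (A3) for every $c\in\mathcal V$ and $q\in\lambda(\mathcal V)$ there exists $x$ with $\lambda(x)=q$ and $\langle c,x\rangle=\langle\lambda(c),\lambda(x)\rangle$. $[u]=\{z:\lambda(z)=\lambda(u)\}$; $x\prec y$ iff $x\in\operatorname{conv}[y]$. A linear map $D$ is doubly stochastic if $Dx\prec x$ for all $x$. $\operatorname{Aut}(\mathcal V,\mathcal W,\lambda)$ is the set of invertible linear maps $A$ with $\lambda(Ax)=\lambda(x)$ for all $x$. The system is orbit-transitive if $\lambda(x)=\lambda(y)$ implies $y=Ax$ for some $A\in\operatorname{Aut}(\mathcal V,\mathcal W,\lambda)$. *)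

theory Defs
  imports "HOL-Analysis.Analysis"
begin

definition FTvN :: "('v::real_inner \<Rightarrow> 'w::real_inner) \<Rightarrow> bool" where
  "FTvN lam \<longleftrightarrow>
     (\<forall>x. norm (lam x) = norm x) \<and>
     (\<forall>x y. inner x y \<le> inner (lam x) (lam y)) \<and>
     (\<forall>c q. q \<in> range lam \<longrightarrow> (\<exists>x. lam x = q \<and> inner c x = inner (lam c) (lam x)))"

definition eqclass :: "('v \<Rightarrow> 'w) \<Rightarrow> 'v \<Rightarrow> 'v set" where
  "eqclass lam u = {z. lam z = lam u}"

definition majorized :: "('v::real_vector \<Rightarrow> 'w) \<Rightarrow> 'v \<Rightarrow> 'v \<Rightarrow> bool" where
  "majorized lam x y \<longleftrightarrow> x \<in> convex hull (eqclass lam y)"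

definition doubly_stochastic :: "('v::real_vector \<Rightarrow> 'w) \<Rightarrow> ('v \<Rightarrow> 'v) \<Rightarrow> bool" where
  "doubly_stochastic lam D \<longleftrightarrow> linear D \<and> (\<forall>x. majorized lam (D x) x)"

definition Aut :: "('v::real_vector \<Rightarrow> 'w) \<Rightarrow> ('v \<Rightarrow> 'v) set" where
  "Aut lam = {A. linear A \<and> bij A \<and> (\<forall>x. lam (A x) = lam x)}"

definition orbit_transitive :: "('v::real_vector \<Rightarrow> 'w) \<Rightarrow> bool" where
  "orbit_transitive lam \<longleftrightarrow> (\<forall>x y. lam x = lam y \<longrightarrow> (\<exists>A\<in>Aut lam. y = A x))"

end

theory Submission
  imports Defs
begin

lemma ds_comb:
  assumes "finite S" "S \<subseteq> Aut lam" "\<forall>A\<in>S. 0 \<le> u A" "sum u S = 1"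
  shows "doubly_stochastic lam (\<lambda>z. \<Sum>A\<in>S. u A *\<^sub>R A z)"
  unfolding doubly_stochastic_def
proof
  show "linear (\<lambda>z. \<Sum>A\<in>S. u A *\<^sub>R A z)"
  proof (rule linear_compose_sum, rule ballI)
    fix A assume "A \<in> S"
    then have "linear A" using assms(2) by (auto simp: Aut_def)
    show "linear (\<lambda>z. u A *\<^sub>R A z)"
    proof (rule linearI)
      have h: "\<forall>x y. A (x + y) = A x + A y" "\<forall>c x. A (c *\<^sub>R x) = c *\<^sub>R A x"
        using \<open>linear A\<close> unfolding linear_iff by auto
      show "\<And>b1 b2. u A *\<^sub>R A (b1 + b2) = u A *\<^sub>R A b1 + u A *\<^sub>R A b2"
        using h(1) by (simp add: scaleR_add_right)
      show "\<And>r b. u A *\<^sub>R A (r *\<^sub>R b) = r *\<^sub>R (u A *\<^sub>R A b)"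
        using h(2) by simp
    qed
  qed
  show "\<forall>x. majorized lam (\<Sum>A\<in>S. u A *\<^sub>R A x) x"
  proof
    fix x
    have "(\<Sum>A\<in>S. u A *\<^sub>R A x) \<in> convex hull (eqclass lam x)"
    proof (rule convex_sum[OF assms(1) convex_convex_hull])
      show "\<And>i. i \<in> S \<Longrightarrow> 0 \<le> u i" using assms(3) by auto
      show "sum u S = 1" by fact
      show "\<And>i. i \<in> S \<Longrightarrow> i x \<in> convex hull eqclass lam x"
        using assms(2) by (intro hull_inc) (auto simp: Aut_def eqclass_def)
    qed
    then show "majorized lam (\<Sum>A\<in>S. u A *\<^sub>R A x) x" by (simp add: majorized_def)
  qed
qed

theorem corollary9p5:
  fixes lam :: "'v::euclidean_space \<Rightarrow> 'w::real_inner"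
    and x y :: 'v
  assumes "FTvN lam"
    and "orbit_transitive lam"
    and "majorized lam x y"
  shows "\<exists>D. doubly_stochastic lam D \<and>
           (\<exists>S u. finite S \<and> S \<subseteq> Aut lam \<and> (\<forall>A\<in>S. 0 \<le> u A) \<and> sum u S = 1 \<and>
                  D = (\<lambda>z. \<Sum>A\<in>S. u A *\<^sub>R A z)) \<and>
           x = D y"
proof -
  from assms(3) obtain Z w where Z: "finite Z" "Z \<subseteq> eqclass lam y" "\<forall>z\<in>Z. 0 \<le> w z"
    "sum w Z = 1" "(\<Sum>z\<in>Z. w z *\<^sub>R z) = x"
    unfolding majorized_def convex_hull_explicit by blast
  define f where "f z = (SOME A. A \<in> Aut lam \<and> z = A y)" for z
  have f: "f z \<in> Aut lam \<and> z = f z y" if "z \<in> Z" for z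
  proof -
    have "lam y = lam z" using Z(2) that by (auto simp: eqclass_def)
    then have "\<exists>A. A \<in> Aut lam \<and> z = A y" using assms(2) unfolding orbit_transitive_def by blast
    then show ?thesis unfolding f_def by (rule someI_ex)
  qed
  have inj: "inj_on f Z" by (metis f inj_onI)
  define S where "S = f ` Z"
  define u where "u A = w (A y)" for A :: "'v \<Rightarrow> 'v"
  have fS: "finite S" using Z(1) S_def by auto
  have SA: "S \<subseteq> Aut lam" using f S_def by auto
  have un: "\<forall>A\<in>S. 0 \<le> u A" using f Z(3) S_def u_def by auto
  have s1: "sum u S = 1"
    unfolding S_def using sum.reindex[OF inj, of u] Z(4) f
    by (simp add: u_def)
  have xD: "x = (\<Sum>A\<in>S. u A *\<^sub>R A y)"
  proof -
    have "(\<Sum>A\<in>S. u A *\<^sub>R A y) = (\<Sum>z\<in>Z. u (f z) *\<^sub>R f z y)"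
      unfolding S_def by (rule sum.reindex[OF inj, unfolded comp_def])
    also have "\<dots> = (\<Sum>z\<in>Z. w z *\<^sub>R z)"
      by (rule sum.cong) (use f in \<open>auto simp: u_def\<close>)
    finally show ?thesis using Z(5) by simp
  qed
  show ?thesis
    using ds_comb[OF fS SA un s1] fS SA un s1 xD by blast
qed

end
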